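(* Let $n\ge 11$ and let $G$ be a connected tridegreed graph of order $n$ whose set of distinct vertex degrees is $\{d_1,d_2,d_3\}$ with $d_1<d_2<d_3=n-1$. Then there exists an integer $t$ lying between $\frac{3}{10}n$ and $\frac{4}{10}n$ such that $$cM_2(G)<cM_2(K_t+\overline{K}_{n-t}).$$
   Context: All graphs are finite and simple. For a graph $G$ and a vertex $u$, $d_u(G)$ denotes the degree of $u$ in $G$. The complementary second Zagreb index of $G$ is $cM_2(G)=\sum_{uv\in E(G)}\left|(d_u(G))^2-(d_v(G))^2\right|$. A graph is tridegreed if the set of distinct vertex degrees has exactly three elements. $K_m$ is the complete graph on $m$ vertices, $\overline{H}$ is the complement of $H$, and $H_1+H_2$ (the join) is the graph on the disjoint union $V(H_1)\cup V(H_2)$ with edge set $E(H_1)\cup E(H_2)\cup\{h_1h_2: h_1\in V(H_1),h_2\in V(H_2)\}$. *)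

theory Defs
  imports Main
begin

type_synonym 'a graph = "'a set \<times> ('a \<Rightarrow> 'a \<Rightarrow> bool)"

definition verts :: "'a graph \<Rightarrow> 'a set" where "verts G = fst G"
definition adj :: "'a graph \<Rightarrow> 'a \<Rightarrow> 'a \<Rightarrow> bool" where "adj G = snd G"

definition simple_graph :: "'a graph \<Rightarrow> bool" where
  "simple_graph G \<longleftrightarrow> finite (verts G) \<and>
     (\<forall>u v. adj G u v \<longrightarrow> u \<in> verts G \<and> v \<in> verts G \<and> u \<noteq> v \<and> adj G v u)"

definition connected_graph :: "'a graph \<Rightarrow> bool" where
  "connected_graph G \<longleftrightarrow> (\<forall>u\<in>verts G. \<forall>v\<in>verts G. (adj G)\<^sup>*\<^sup>* u v)"

definition deg :: "'a graph \<Rightarrow> 'a \<Rightarrow> nat" where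
  "deg G u = card {v \<in> verts G. adj G u v}"

definition degree_set :: "'a graph \<Rightarrow> nat set" where
  "degree_set G = deg G ` verts G"

definition tridegreed :: "'a graph \<Rightarrow> bool" where
  "tridegreed G \<longleftrightarrow> card (degree_set G) = 3"

text \<open>Each (unordered) edge is counted twice when summing over ordered adjacent pairs,
  so we halve that sum (the sum is even, the summand being symmetric).\<close>
definition cM2 :: "'a graph \<Rightarrow> int" where
  "cM2 G = (\<Sum>(u,v)\<in>{(u,v). u \<in> verts G \<and> v \<in> verts G \<and> adj G u v}.
              \<bar>(int (deg G u))^2 - (int (deg G v))^2\<bar>) div 2"

definition complete_graph :: "nat \<Rightarrow> nat graph" where
  "complete_graph m = ({0..<m}, \<lambda>i j. i < m \<and> j < m \<and> i \<noteq> j)"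

definition complement :: "'a graph \<Rightarrow> 'a graph" where
  "complement G = (verts G, \<lambda>u v. u \<in> verts G \<and> v \<in> verts G \<and> u \<noteq> v \<and> \<not> adj G u v)"

definition join :: "'a graph \<Rightarrow> 'b graph \<Rightarrow> ('a + 'b) graph" where
  "join G H = (Inl ` verts G \<union> Inr ` verts H,
     \<lambda>x y. case (x, y) of
        (Inl a, Inl b) \<Rightarrow> adj G a b
      | (Inr a, Inr b) \<Rightarrow> adj H a b
      | (Inl a, Inr b) \<Rightarrow> a \<in> verts G \<and> b \<in> verts H
      | (Inr a, Inl b) \<Rightarrow> a \<in> verts H \<and> b \<in> verts G)"

end

theory Submission
  imports Defs
begin

definition F :: "nat \<Rightarrow> nat \<Rightarrow> int" where
  "F n t = int t * (int n - int t) * ((int n - 1)^2 - (int t)^2)"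

lemma F_step: "F n (Suc t) - F n t = - (int n - 1 - int t) * (4 * (int t)^2 + (int n + 2) * int t + 2 * int n - (int n)^2)"
  unfolding F_def by (simp add: algebra_simps power2_eq_square)

lemma F_inc: assumes "n \<ge> 11" "10 * t < 3 * n" shows "F n t \<le> F n (Suc t)"
proof -
  have h1: "10 * int t \<le> 3 * int n" using assms by linarith
  have t0: "int t \<ge> 0" by simp
  have p1: "(10 * int t) * (10 * int t) \<le> (3 * int n) * (3 * int n)"
    using mult_mono[OF h1 h1] by simp
  have p2: "int n * (10 * int t) \<le> int n * (3 * int n)"
    using h1 by (intro mult_left_mono) auto
  have p3: "int n * int n \<ge> 11 * int n" using assms by (intro mult_right_mono) auto
  have Q: "4 * (int t)^2 + (int n + 2) * int t + 2 * int n - (int n)^2 \<le> 0"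
    using p1 p2 p3 h1 unfolding power2_eq_square by (simp add: algebra_simps)
  have "int n - 1 - int t \<ge> 0" using assms by linarith
  then have "- (int n - 1 - int t) * (4 * (int t)^2 + (int n + 2) * int t + 2 * int n - (int n)^2) \<ge> 0"
    using Q by (simp add: mult_nonpos_nonpos)
  then show ?thesis using F_step[of n t] by linarith
qed

lemma Q0: assumes "n \<ge> 11" shows
  "4 * (int (4*n div 10))^2 + (int n + 2) * int (4*n div 10) + 2 * int n - (int n)^2 \<ge> 0"
proof -
  obtain k r where kr: "n = 5*k + r" "r < 5" by (metis div_mod_decomp mod_less_divisor zero_less_numeral mult.commute)
  have k2: "k \<ge> 2" using kr assms by linarith
  have kk: "int k * int k \<ge> 2 * int k" using k2 by (intro mult_right_mono) auto
  consider "r = 0" | "r = 1" | "r = 2" | "r = 3" | "r = 4" using kr by linarith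
  then show ?thesis
  proof cases
    case 1
    then have "4*n div 10 = 2*k" using kr by presburger
    then show ?thesis using kr 1 kk by (simp add: algebra_simps power2_eq_square)
  next
    case 2
    then have "4*n div 10 = 2*k" using kr by presburger
    then show ?thesis using kr 2 kk by (simp add: algebra_simps power2_eq_square)
  next
    case 3
    then have "4*n div 10 = 2*k" using kr by presburger
    then show ?thesis using kr 3 kk by (simp add: algebra_simps power2_eq_square)
  next
    case 4
    then have "4*n div 10 = 2*k+1" using kr by presburger
    then show ?thesis using kr 4 kk by (simp add: algebra_simps power2_eq_square)
  next
    case 5
    then have "4*n div 10 = 2*k+1" using kr by presburger
    then show ?thesis using kr 5 kk by (simp add: algebra_simps power2_eq_square)
  qed
qed

lemma F_dec: assumes "n \<ge> 11" "4 * n div 10 \<le> t" "Suc t \<le> n" shows "F n (Suc t) \<le> F n t"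
proof -
  define t0 where "t0 = 4 * n div 10"
  have "int t - int t0 \<ge> 0" using assms t0_def by simp
  moreover have "4 * (int t + int t0) + int n + 2 \<ge> 0" by simp
  ultimately have m: "(int t - int t0) * (4 * (int t + int t0) + int n + 2) \<ge> 0" by simp
  have Q: "4 * (int t)^2 + (int n + 2) * int t + 2 * int n - (int n)^2 \<ge> 0"
    using Q0[OF assms(1)] m unfolding t0_def[symmetric] by (simp add: algebra_simps power2_eq_square)
  have "int n - 1 - int t \<ge> 0" using assms by linarith
  then have "(int n - 1 - int t) * (4 * (int t)^2 + (int n + 2) * int t + 2 * int n - (int n)^2) \<ge> 0"
    using Q by (rule mult_nonneg_nonneg)
  then show ?thesis using F_step[of n t] by linarith
qed


lemma F_inc_chain: assumes "n \<ge> 11" "t1 \<le> t2" "10 * t2 \<le> 3 * n + 9" shows "F n t1 \<le> F n t2"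
  using assms(2,3)
proof (induction t2 rule: dec_induct)
  case base then show ?case by simp
next
  case (step m)
  have "10 * m < 3 * n" using step(4) by simp
  then have "F n m \<le> F n (Suc m)" using F_inc[OF assms(1)] by blast
  then show ?case using step by simp
qed

lemma F_dec_chain: assumes "n \<ge> 11" "t2 \<le> t1" "4 * n div 10 \<le> t2" "t1 \<le> n" shows "F n t1 \<le> F n t2"
  using assms(2,4)
proof (induction t1 rule: dec_induct)
  case base then show ?case by simp
next
  case (step m)
  have "4 * n div 10 \<le> m" "Suc m \<le> n" using step assms(3) by linarith+
  then have "F n (Suc m) \<le> F n m" using F_dec[OF assms(1)] by blast
  then show ?case using step by simp
qed

lemma key:
  fixes n s n1 n2 d1 d2 e :: nat
  assumes "s \<ge> 1" "n1 \<ge> 1" "n2 \<ge> 1" "n = s + n1 + n2" "s \<le> d1" "d1 < d2" "d2 < n - 1"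
    "e \<le> n1 * n2" "e \<le> n1 * (d1 - s)"
  shows "\<exists>t. t \<le> n - 1 \<and>
    int s * int n1 * ((int n - 1)^2 - (int d1)^2) + int s * int n2 * ((int n - 1)^2 - (int d2)^2)
    + int e * ((int d2)^2 - (int d1)^2) < F n t"
proof -
  define N where "N = int n - 1"
  define a1 where "a1 = N^2 - (int d1)^2"
  define a2 where "a2 = N^2 - (int d2)^2"
  define b where "b = (int d2)^2 - (int d1)^2"
  have dd: "int d2 < N" using assms N_def by linarith
  have a2p: "a2 > 0" unfolding a2_def using dd power_strict_mono[of "int d2" N 2] by simp
  have bp: "b > 0" unfolding b_def using assms power_strict_mono[of "int d1" "int d2" 2] by simp
  have a1e: "a1 = a2 + b" unfolding a1_def a2_def b_def by simp
  have ei: "int e \<le> int n1 * (int d1 - int s)" 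
  proof -
    have "int e \<le> int (n1 * (d1 - s))" using assms(9) by linarith
    then show ?thesis using assms(5) by (simp add: of_nat_diff)
  qed
  have ei2: "int e \<le> int n1 * int n2" using assms(8) by (metis of_nat_le_iff of_nat_mult)
  define tot where "tot = int s * int n1 * a1 + int s * int n2 * a2 + int e * b"
  have "\<exists>t. t \<le> n - 1 \<and> tot < F n t"
  proof (cases "int e \<le> int s * int n2")
    case True
    have st: "int s * int n1 * a1 + int s * int n2 * a2 + int s * int n2 * b = int s * (int n - int s) * a1"
      using a1e assms(4) by (simp add: algebra_simps)
    have s1: "int s * (int n - int s) * a1 \<le> F n s"
    proof -
      have "a1 \<le> N^2 - (int s)^2" unfolding a1_def using assms(5) power_mono[of "int s" "int d1" 2] by simp
      moreover have "int s * (int n - int s) \<ge> 0" using assms by simp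
      ultimately show ?thesis unfolding F_def N_def by (simp add: mult_left_mono)
    qed
    show ?thesis
    proof (cases "int e < int s * int n2")
      case True
      have "int e * b < int s * int n2 * b" using True bp by (simp add: mult_strict_right_mono)
      then have "tot < F n s" using st s1 unfolding tot_def by linarith
      then show ?thesis using assms by (intro exI[of _ s]) auto
    next
      case False
      then have eq: "int e = int s * int n2" using \<open>int e \<le> int s * int n2\<close> by linarith
      have "int s * int n2 \<ge> 1" using assms mult_mono[of 1 "int s" 1 "int n2"] by simp
      then have "int d1 > int s"
      proof -
        assume h: "int s * int n2 \<ge> 1"
        show ?thesis
        proof (rule ccontr)
          assume "\<not> int d1 > int s"
          then have "int d1 = int s" using assms(5) by linarith
          then show False using ei eq h by simp
        qed
      qed
      then have "a1 < N^2 - (int s)^2" unfolding a1_def using power_strict_mono[of "int s" "int d1" 2] by simp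
      moreover have "int s * (int n - int s) > 0" using assms by simp
      ultimately have "int s * (int n - int s) * a1 < F n s" unfolding F_def N_def
        by (simp add: mult_strict_left_mono)
      then have "tot < F n s" using st eq unfolding tot_def by (simp add: algebra_simps)
      then show ?thesis using assms by (intro exI[of _ s]) auto
    qed
  next
    case False
    have te: "tot = (int s * int n1 + int e) * a1 - (int e - int s * int n2) * a2"
      unfolding tot_def using a1e by (simp add: algebra_simps)
    have "(int e - int s * int n2) * a2 > 0" using False a2p by simp
    then have lt: "tot < (int s * int n1 + int e) * a1" using te by linarith
    have a1p: "a1 > 0" using a1e a2p bp by simp
    show ?thesis
    proof (cases "d1 \<le> s + n2")
      case True
      have "int s * int n1 + int e \<le> int n1 * int d1" using ei by (simp add: algebra_simps)
      also have "\<dots> \<le> (int n - int d1) * int d1" using True assms(4) by (intro mult_right_mono) auto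
      finally have "(int s * int n1 + int e) * a1 \<le> (int n - int d1) * int d1 * a1"
        using a1p by (simp add: mult_right_mono)
      also have "\<dots> = F n d1" unfolding F_def a1_def N_def by (simp add: algebra_simps)
      finally show ?thesis using lt assms by (intro exI[of _ d1]) auto
    next
      case False
      define T where "T = s + n2"
      have "int s * int n1 + int e \<le> int n1 * int T" using ei2 T_def by (simp add: algebra_simps)
      also have "\<dots> = (int n - int T) * int T" using assms(4) T_def by simp
      finally have "(int s * int n1 + int e) * a1 \<le> (int n - int T) * int T * a1"
        using a1p by (simp add: mult_right_mono)
      also have "\<dots> \<le> (int n - int T) * int T * (N^2 - (int T)^2)"
      proof -
        have "a1 \<le> N^2 - (int T)^2" unfolding a1_def using False T_def power_mono[of "int T" "int d1" 2] by simp
        moreover have "(int n - int T) * int T \<ge> 0" using assms T_def by simp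
        ultimately show ?thesis by (simp add: mult_left_mono)
      qed
      also have "\<dots> = F n T" unfolding F_def N_def by (simp add: algebra_simps)
      finally show ?thesis using lt assms T_def by (intro exI[of _ T]) auto
    qed
  qed
  then show ?thesis unfolding tot_def a1_def a2_def b_def N_def .
qed


lemma pair_sum:
  assumes "finite V"
  shows "(\<Sum>(u,v)\<in>{(u,v). u \<in> V \<and> v \<in> V \<and> R u v}. g u v) = (\<Sum>u\<in>V. \<Sum>v\<in>V. if R u v then g u v else (0::int))"
proof -
  have e: "{(u,v). u \<in> V \<and> v \<in> V \<and> R u v} = {p \<in> V \<times> V. R (fst p) (snd p)}" by auto
  have "(\<Sum>u\<in>V. \<Sum>v\<in>V. if R u v then g u v else (0::int)) = (\<Sum>p\<in>V \<times> V. if R (fst p) (snd p) then g (fst p) (snd p) else 0)"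
    by (simp add: sum.cartesian_product case_prod_beta)
  also have "\<dots> = (\<Sum>p\<in>{p \<in> V \<times> V. R (fst p) (snd p)}. g (fst p) (snd p))"
    using assms by (simp add: sum.inter_filter)
  finally show ?thesis unfolding e by (simp add: case_prod_beta)
qed

lemma cM2_join:
  assumes "t < n"
  shows "cM2 (join (complete_graph t) (complement (complete_graph (n - t)))) = F n t"
proof -
  define J where "J = join (complete_graph t) (complement (complete_graph (n - t)))"
  define m where "m = n - t"
  define L :: "(nat + nat) set" where "L = Inl ` {0..<t}"
  define R :: "(nat + nat) set" where "R = Inr ` {0..<m}"
  have VJ: "verts J = L \<union> R"
    unfolding J_def L_def R_def m_def by (simp add: join_def verts_def complete_graph_def complement_def)
  have a1: "adj J (Inl a) (Inl b) = (a < t \<and> b < t \<and> a \<noteq> b)" for a b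
    unfolding J_def by (simp add: join_def adj_def verts_def complete_graph_def complement_def)
  have a2: "adj J (Inr a) (Inr b) = False" for a b
    unfolding J_def by (simp add: join_def adj_def verts_def complete_graph_def complement_def)
  have a3: "adj J (Inl a) (Inr b) = (a < t \<and> b < m)" for a b
    unfolding J_def m_def by (simp add: join_def adj_def verts_def complete_graph_def complement_def)
  have a4: "adj J (Inr a) (Inl b) = (a < m \<and> b < t)" for a b
    unfolding J_def m_def by (simp add: join_def adj_def verts_def complete_graph_def complement_def)
  have dL: "deg J (Inl a) = n - 1" if "a < t" for a
  proof -
    have "{v \<in> verts J. adj J (Inl a) v} = Inl ` ({0..<t} - {a}) \<union> R"
      unfolding VJ L_def R_def using that by (auto simp: a1 a3)
    moreover have "card (Inl ` ({0..<t} - {a}) \<union> R) = (t - 1) + m"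
      unfolding R_def using that
      by (subst card_Un_disjoint) (auto simp: card_image inj_on_def)
    ultimately show ?thesis unfolding deg_def m_def using assms that by simp
  qed
  have dR: "deg J (Inr b) = t" if "b < m" for b
  proof -
    have "{v \<in> verts J. adj J (Inr b) v} = L"
      unfolding VJ L_def R_def using that by (auto simp: a2 a4)
    then show ?thesis unfolding deg_def L_def by (simp add: card_image)
  qed
  define c where "c = (int n - 1)^2 - (int t)^2"
  have c0: "c \<ge> 0" unfolding c_def using assms power_mono[of "int t" "int n - 1" 2] by simp
  define G where "G = (\<lambda>u v. if adj J u v then \<bar>(int (deg J u))^2 - (int (deg J v))^2\<bar> else (0::int))"
  have fin: "finite (verts J)" unfolding VJ L_def R_def by simp
  have disj: "L \<inter> R = {}" unfolding L_def R_def by auto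
  have sp: "(\<Sum>x\<in>verts J. f x) = (\<Sum>x\<in>L. f x) + (\<Sum>x\<in>R. f x)" for f :: "_ \<Rightarrow> int"
    unfolding VJ using disj by (simp add: L_def R_def sum.union_disjoint)
  have sL: "(\<Sum>x\<in>L. f x) = (\<Sum>a\<in>{0..<t}. f (Inl a))" for f :: "_ \<Rightarrow> int"
    unfolding L_def by (simp add: sum.reindex)
  have sR: "(\<Sum>x\<in>R. f x) = (\<Sum>a\<in>{0..<m}. f (Inr a))" for f :: "_ \<Rightarrow> int"
    unfolding R_def by (simp add: sum.reindex)
  have gLL: "G (Inl a) (Inl b) = 0" if "a < t" "b < t" for a b using that by (simp add: G_def dL)
  have gLR: "G (Inl a) (Inr b) = c" if "a < t" "b < m" for a b using that c0 assms by (simp add: G_def dL dR a3 c_def of_nat_diff)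
  have gRL: "G (Inr a) (Inl b) = c" if "a < m" "b < t" for a b using that c0 assms by (simp add: G_def dL dR a4 c_def of_nat_diff)
  have gRR: "G (Inr a) (Inr b) = 0" for a b by (simp add: G_def a2)
  have S: "(\<Sum>u\<in>verts J. \<Sum>v\<in>verts J. G u v) = 2 * (int t * int m * c)"
  proof -
    have i1: "(\<Sum>a = 0..<t. G (Inl x) (Inl a)) = 0" if "x < t" for x
      by (rule sum.neutral) (auto simp: gLL that)
    have i2: "(\<Sum>a = 0..<m. G (Inl x) (Inr a)) = int m * c" if "x < t" for x
    proof -
      have "(\<Sum>a = 0..<m. G (Inl x) (Inr a)) = (\<Sum>a = 0..<m. c)"
        by (rule sum.cong) (auto simp: gLR that)
      then show ?thesis by simp
    qed
    have i3: "(\<Sum>a = 0..<t. G (Inr x) (Inl a)) = int t * c" if "x < m" for x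
    proof -
      have "(\<Sum>a = 0..<t. G (Inr x) (Inl a)) = (\<Sum>a = 0..<t. c)"
        by (rule sum.cong) (auto simp: gRL that)
      then show ?thesis by simp
    qed
    have "(\<Sum>x = 0..<t. (\<Sum>a = 0..<t. G (Inl x) (Inl a)) + (\<Sum>a = 0..<m. G (Inl x) (Inr a))) = (\<Sum>x = 0..<t. int m * c)"
      by (rule sum.cong) (auto simp: i1 i2)
    moreover have "(\<Sum>x = 0..<m. \<Sum>a = 0..<t. G (Inr x) (Inl a)) = (\<Sum>x = 0..<m. int t * c)"
      by (rule sum.cong) (auto simp: i3)
    ultimately show ?thesis by (simp add: sp sL sR gRR algebra_simps)
  qed
  have "cM2 J = (\<Sum>u\<in>verts J. \<Sum>v\<in>verts J. G u v) div 2"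
    unfolding cM2_def G_def using pair_sum[OF fin] by simp
  also have "\<dots> = F n t" unfolding S F_def c_def m_def using assms by (simp add: of_nat_diff)
  finally show ?thesis unfolding J_def .
qed


lemma absq: assumes "(x::nat) \<le> y"
  shows "\<bar>(int x)^2 - (int y)^2\<bar> = (int y)^2 - (int x)^2" "\<bar>(int y)^2 - (int x)^2\<bar> = (int y)^2 - (int x)^2"
  using assms power_mono[of "int x" "int y" 2] by auto

lemma graph_part:
  fixes G :: "'a graph" and n d1 d2 d3 :: nat
  assumes "n \<ge> 11"
    and "simple_graph G"
    and "card (verts G) = n"
    and "degree_set G = {d1, d2, d3}"
    and "d1 < d2" and "d2 < d3" and "d3 = n - 1"
  shows "\<exists>s n1 n2 e. s \<ge> 1 \<and> n1 \<ge> 1 \<and> n2 \<ge> 1 \<and> n = s + n1 + n2 \<and> s \<le> d1 \<and>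
     e \<le> n1 * n2 \<and> e \<le> n1 * (d1 - s) \<and>
     cM2 G = int s * int n1 * ((int d3)^2 - (int d1)^2) + int s * int n2 * ((int d3)^2 - (int d2)^2)
       + int e * ((int d2)^2 - (int d1)^2)"
proof -
  define V where "V = verts G"
  define A where "A = adj G"
  define d where "d = deg G"
  have fin: "finite V" using assms(2) unfolding simple_graph_def V_def by simp
  have sym: "A u v \<Longrightarrow> A v u" for u v using assms(2) unfolding simple_graph_def A_def by blast
  have symeq: "A u v = A v u" for u v using sym by blast
  have inV: "A u v \<Longrightarrow> u \<in> V \<and> v \<in> V \<and> u \<noteq> v" for u v
    using assms(2) unfolding simple_graph_def A_def V_def by blast
  have dimg: "d ` V = {d1, d2, d3}" using assms(4) unfolding degree_set_def d_def V_def .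
  define V1 where "V1 = {v \<in> V. d v = d1}"
  define V2 where "V2 = {v \<in> V. d v = d2}"
  define V3 where "V3 = {v \<in> V. d v = d3}"
  have Vun: "V = V1 \<union> V2 \<union> V3" unfolding V1_def V2_def V3_def using dimg by auto
  have ne1: "V1 \<noteq> {}"
  proof -
    have "d1 \<in> d ` V" using dimg by simp
    then obtain v where "v \<in> V" "d v = d1" by blast
    then show ?thesis unfolding V1_def by blast
  qed
  have ne2: "V2 \<noteq> {}"
  proof -
    have "d2 \<in> d ` V" using dimg by simp
    then obtain v where "v \<in> V" "d v = d2" by blast
    then show ?thesis unfolding V2_def by blast
  qed
  have ne3: "V3 \<noteq> {}"
  proof -
    have "d3 \<in> d ` V" using dimg by simp
    then obtain v where "v \<in> V" "d v = d3" by blast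
    then show ?thesis unfolding V3_def by blast
  qed
  have f1: "finite V1" "finite V2" "finite V3" using fin unfolding V1_def V2_def V3_def by auto
  have dis: "V1 \<inter> V2 = {}" "V1 \<inter> V3 = {}" "V2 \<inter> V3 = {}"
    unfolding V1_def V2_def V3_def using assms(5,6) by auto
  define s where "s = card V3"
  define n1 where "n1 = card V1"
  define n2 where "n2 = card V2"
  have s1: "s \<ge> 1" "n1 \<ge> 1" "n2 \<ge> 1" unfolding s_def n1_def n2_def using f1 ne1 ne2 ne3
    by (auto simp: Suc_le_eq card_gt_0_iff)
  have ncard: "n = s + n1 + n2"
  proof -
    have "card V = card V1 + card V2 + card V3" unfolding Vun using f1 dis
      by (simp add: card_Un_disjoint Int_Un_distrib2)
    then show ?thesis using assms(3) unfolding V_def s_def n1_def n2_def by simp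
  qed
  have full: "A v u" if "v \<in> V3" "u \<in> V" "u \<noteq> v" for u v
  proof -
    have sub: "{w \<in> V. A v w} \<subseteq> V - {v}" using inV by auto
    have "card (V - {v}) = n - 1" using that assms(3) fin unfolding V3_def V_def by simp
    moreover have "card {w \<in> V. A v w} = n - 1" using that assms(7) unfolding V3_def d_def deg_def V_def A_def by simp
    ultimately have "{w \<in> V. A v w} = V - {v}" using card_subset_eq[OF _ sub] fin by simp
    then show ?thesis using that by auto
  qed
  have nb: "card {w \<in> V2. A v w} + s \<le> d1" if "v \<in> V1" for v
  proof -
    have "V3 \<subseteq> {w \<in> V. A v w}"
    proof
      fix w assume w: "w \<in> V3"
      have "w \<noteq> v" using w that assms(5,6) unfolding V1_def V3_def by auto
      have "w \<in> V" "v \<in> V" using w that unfolding V1_def V3_def by auto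
      then have "A w v" using full[of w v] w \<open>w \<noteq> v\<close> by blast
      then show "w \<in> {w \<in> V. A v w}" using sym[of w v] \<open>w \<in> V\<close> by blast
    qed
    moreover have "{w \<in> V2. A v w} \<subseteq> {w \<in> V. A v w}" unfolding V2_def by auto
    ultimately have "{w \<in> V2. A v w} \<union> V3 \<subseteq> {w \<in> V. A v w}" by blast
    then have "card ({w \<in> V2. A v w} \<union> V3) \<le> card {w \<in> V. A v w}" using fin by (intro card_mono) auto
    moreover have "card ({w \<in> V2. A v w} \<union> V3) = card {w \<in> V2. A v w} + s"
      unfolding s_def using f1 dis by (subst card_Un_disjoint) auto
    moreover have "card {w \<in> V. A v w} = d1" using that unfolding V1_def d_def deg_def V_def A_def by simp
    ultimately show ?thesis by simp
  qed
  have sd1: "s \<le> d1"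
  proof -
    obtain v where "v \<in> V1" using ne1 by blast
    from nb[OF this] show ?thesis by linarith
  qed
  define ev where "ev u = card {w \<in> V2. A u w}" for u
  define ew where "ew u = card {w \<in> V1. A u w}" for u
  define e where "e = (\<Sum>u\<in>V1. ev u)"
  have e1: "e \<le> n1 * n2"
  proof -
    have "\<forall>u\<in>V1. ev u \<le> n2" unfolding ev_def n2_def using f1 by (simp add: card_mono)
    then show ?thesis unfolding e_def n1_def using sum_bounded_above[of V1 ev n2] by simp
  qed
  have e2: "e \<le> n1 * (d1 - s)"
  proof -
    have "\<forall>u\<in>V1. ev u \<le> d1 - s"
    proof
      fix u assume "u \<in> V1"
      from nb[OF this] show "ev u \<le> d1 - s" unfolding ev_def by linarith
    qed
    then show ?thesis unfolding e_def n1_def using sum_bounded_above[of V1 ev "d1 - s"] by simp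
  qed
  have ind: "card {w \<in> X. P w} = (\<Sum>w\<in>X. if P w then 1 else 0)" if "finite X" for X and P :: "'a \<Rightarrow> bool"
  proof -
    have "(\<Sum>w\<in>X. if P w then 1 else 0) = (\<Sum>w\<in>{w\<in>X. P w}. (1::nat))"
      by (rule sum.inter_filter[OF that, symmetric])
    then show ?thesis by simp
  qed
  have esym: "(\<Sum>u\<in>V2. ew u) = e"
  proof -
    have "(\<Sum>u\<in>V2. ew u) = (\<Sum>u\<in>V2. \<Sum>w\<in>V1. if A u w then 1 else 0)"
      unfolding ew_def using f1 by (simp add: ind)
    also have "\<dots> = (\<Sum>w\<in>V1. \<Sum>u\<in>V2. if A u w then 1 else 0)" by (rule sum.swap)
    also have "\<dots> = (\<Sum>w\<in>V1. \<Sum>u\<in>V2. if A w u then 1 else 0)"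
      by (intro sum.cong refl) (simp add: symeq)
    also have "\<dots> = e" unfolding e_def ev_def using f1 by (simp add: ind)
    finally show ?thesis .
  qed
  define h where "h u v = \<bar>(int (d u))^2 - (int (d v))^2\<bar>" for u v
  define a1 where "a1 = (int d3)^2 - (int d1)^2"
  define a2 where "a2 = (int d3)^2 - (int d2)^2"
  define b where "b = (int d2)^2 - (int d1)^2"
  have sp3: "(\<Sum>x\<in>V. f x) = (\<Sum>x\<in>V1. f x) + (\<Sum>x\<in>V2. f x) + (\<Sum>x\<in>V3. f x)" for f :: "'a \<Rightarrow> int"
    unfolding Vun using f1 dis by (simp add: sum.union_disjoint Int_Un_distrib2)
  have cnt: "(\<Sum>v\<in>X. if A u v then c else 0) = int (card {v \<in> X. A u v}) * c" if "finite X" for X u and c :: int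
    using that sum.inter_filter[of X "\<lambda>_. c" "A u"] by simp
  have hsame: "h u v = 0" if "d u = d v" for u v using that unfolding h_def by simp
  have hv: "h u v = (int y)^2 - (int x)^2 \<and> h v u = (int y)^2 - (int x)^2"
    if "d u = x" "d v = y" "x \<le> y" for u v x y
    using that absq[OF that(3)] unfolding h_def by simp
  have bc: "(\<Sum>v\<in>X. if A u v then h u v else 0) = (\<Sum>v\<in>X. if A u v then c else 0)"
    if "\<And>v. v \<in> X \<Longrightarrow> h u v = c" for X u c
    using that by (intro sum.cong refl) auto
  have f3: "(\<Sum>v\<in>V3. if A u v then c else 0) = int s * c" if "u \<in> V" "u \<notin> V3" for u c
  proof -
    have "(\<Sum>v\<in>V3. if A u v then c else 0) = (\<Sum>v\<in>V3. c)"
    proof (intro sum.cong refl)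
      fix v assume v: "v \<in> V3"
      then have "A v u" using full[of v u] that by auto
      then show "(if A u v then c else 0) = c" using sym[of v u] by simp
    qed
    then show ?thesis unfolding s_def by simp
  qed
  have z: "(\<Sum>v\<in>X. if A u v then h u v else 0) = 0" if "\<And>v. v \<in> X \<Longrightarrow> d v = d u" for X u
    using that hsame by (intro sum.neutral) auto
  have le13: "d1 \<le> d3" "d2 \<le> d3" "d1 \<le> d2" using assms(5,6) by auto
  define row where "row u = (\<Sum>v\<in>V. if A u v then h u v else 0)" for u
  have r1: "row u = b * int (ev u) + int s * a1" if u: "u \<in> V1" for u
  proof -
    have du: "d u = d1" "u \<in> V" "u \<notin> V3" using u dis unfolding V1_def by auto
    have "(\<Sum>v\<in>V1. if A u v then h u v else 0) = 0" using du by (intro z) (auto simp: V1_def)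
    moreover have "(\<Sum>v\<in>V2. if A u v then h u v else 0) = b * int (ev u)"
    proof -
      have "(\<Sum>v\<in>V2. if A u v then h u v else 0) = (\<Sum>v\<in>V2. if A u v then b else 0)"
        using hv[OF du(1) _ le13(3)] unfolding b_def V2_def by (intro bc) auto
      then show ?thesis unfolding ev_def using cnt[OF f1(2)] by simp
    qed
    moreover have "(\<Sum>v\<in>V3. if A u v then h u v else 0) = int s * a1"
    proof -
      have "(\<Sum>v\<in>V3. if A u v then h u v else 0) = (\<Sum>v\<in>V3. if A u v then a1 else 0)"
        using hv[OF du(1) _ le13(1)] unfolding a1_def V3_def by (intro bc) auto
      then show ?thesis using f3[OF du(2,3)] by simp
    qed
    ultimately show ?thesis unfolding row_def using sp3 by simp
  qed
  have r2: "row u = b * int (ew u) + int s * a2" if u: "u \<in> V2" for u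
  proof -
    have du: "d u = d2" "u \<in> V" "u \<notin> V3" using u dis unfolding V2_def by auto
    have "(\<Sum>v\<in>V2. if A u v then h u v else 0) = 0" using du by (intro z) (auto simp: V2_def)
    moreover have "(\<Sum>v\<in>V1. if A u v then h u v else 0) = b * int (ew u)"
    proof -
      have "(\<Sum>v\<in>V1. if A u v then h u v else 0) = (\<Sum>v\<in>V1. if A u v then b else 0)"
        using hv[OF _ du(1) le13(3)] unfolding b_def V1_def by (intro bc) auto
      then show ?thesis unfolding ew_def using cnt[OF f1(1)] by simp
    qed
    moreover have "(\<Sum>v\<in>V3. if A u v then h u v else 0) = int s * a2"
    proof -
      have "(\<Sum>v\<in>V3. if A u v then h u v else 0) = (\<Sum>v\<in>V3. if A u v then a2 else 0)"
        using hv[OF du(1) _ le13(2)] unfolding a2_def V3_def by (intro bc) auto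
      then show ?thesis using f3[OF du(2,3)] by simp
    qed
    ultimately show ?thesis unfolding row_def using sp3 by simp
  qed
  have r3: "row u = int n1 * a1 + int n2 * a2" if u: "u \<in> V3" for u
  proof -
    have du: "d u = d3" "u \<in> V" using u unfolding V3_def by auto
    have fa: "(\<Sum>v\<in>X. if A u v then c else 0) = int (card X) * c" if "X \<subseteq> V" "u \<notin> X" for X c
    proof -
      have "(\<Sum>v\<in>X. if A u v then c else 0) = (\<Sum>v\<in>X. c)"
        using full[OF u] that by (intro sum.cong refl) auto
      then show ?thesis by simp
    qed
    have "(\<Sum>v\<in>V3. if A u v then h u v else 0) = 0" using du by (intro z) (auto simp: V3_def)
    moreover have "(\<Sum>v\<in>V1. if A u v then h u v else 0) = int n1 * a1"
    proof -
      have "(\<Sum>v\<in>V1. if A u v then h u v else 0) = (\<Sum>v\<in>V1. if A u v then a1 else 0)"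
        using hv[OF _ du(1) le13(1)] unfolding a1_def V1_def by (intro bc) auto
      then show ?thesis unfolding n1_def using fa[of V1 a1] u dis unfolding V1_def by auto
    qed
    moreover have "(\<Sum>v\<in>V2. if A u v then h u v else 0) = int n2 * a2"
    proof -
      have "(\<Sum>v\<in>V2. if A u v then h u v else 0) = (\<Sum>v\<in>V2. if A u v then a2 else 0)"
        using hv[OF _ du(1) le13(2)] unfolding a2_def V2_def by (intro bc) auto
      then show ?thesis unfolding n2_def using fa[of V2 a2] u dis unfolding V2_def by auto
    qed
    ultimately show ?thesis unfolding row_def using sp3 by simp
  qed
  have tot: "(\<Sum>u\<in>V. row u) = 2 * (int s * int n1 * a1 + int s * int n2 * a2 + int e * b)"
  proof -
    have "(\<Sum>u\<in>V1. row u) = b * int e + int n1 * (int s * a1)"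
      using r1 unfolding e_def n1_def by (simp add: sum.distrib sum_distrib_left of_nat_sum)
    moreover have "(\<Sum>u\<in>V2. row u) = b * int e + int n2 * (int s * a2)"
      using r2 esym[symmetric] unfolding n2_def by (simp add: sum.distrib sum_distrib_left of_nat_sum)
    moreover have "(\<Sum>u\<in>V3. row u) = int s * (int n1 * a1 + int n2 * a2)"
      using r3 unfolding s_def by simp
    ultimately show ?thesis using sp3[of row] by (simp add: algebra_simps)
  qed
  have "cM2 G = (\<Sum>u\<in>V. row u) div 2"
    unfolding cM2_def row_def h_def d_def V_def A_def using pair_sum[OF fin[unfolded V_def]] by simp
  then have "cM2 G = int s * int n1 * a1 + int s * int n2 * a2 + int e * b" using tot by simp
  then show ?thesis unfolding a1_def a2_def b_def using s1 ncard sd1 e1 e2 by blast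
qed


theorem proposition5:
  fixes G :: "'a graph" and n d1 d2 d3 :: nat
  assumes "n \<ge> 11"
    and "simple_graph G" and "connected_graph G"
    and "card (verts G) = n"
    and "tridegreed G"
    and "degree_set G = {d1, d2, d3}"
    and "d1 < d2" and "d2 < d3" and "d3 = n - 1"
  shows "\<exists>t::nat. 3 * n \<le> 10 * t \<and> 10 * t \<le> 4 * n \<and>
           cM2 G < cM2 (join (complete_graph t) (complement (complete_graph (n - t))))"
proof -
  obtain s n1 n2 e where P: "s \<ge> 1" "n1 \<ge> 1" "n2 \<ge> 1" "n = s + n1 + n2" "s \<le> d1"
     "e \<le> n1 * n2" "e \<le> n1 * (d1 - s)"
     "cM2 G = int s * int n1 * ((int d3)^2 - (int d1)^2) + int s * int n2 * ((int d3)^2 - (int d2)^2)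
       + int e * ((int d2)^2 - (int d1)^2)"
    using graph_part[OF assms(1,2,4,6,7,8,9)] by blast
  have d3i: "int d3 = int n - 1" using assms(1,9) by simp
  have d2n: "d2 < n - 1" using assms(8,9) by simp
  obtain t1 where t1a: "t1 \<le> n - 1" and t1b: "int s * int n1 * ((int n - 1)^2 - (int d1)^2) + int s * int n2 * ((int n - 1)^2 - (int d2)^2)
       + int e * ((int d2)^2 - (int d1)^2) < F n t1"
    using key[OF P(1-5) assms(7) d2n P(6,7)] by blast
  have t1: "t1 \<le> n - 1" "cM2 G < F n t1" using t1a t1b P(8) d3i by simp_all
  have "\<exists>t. 3 * n \<le> 10 * t \<and> 10 * t \<le> 4 * n \<and> F n t1 \<le> F n t"
  proof (cases "10 * t1 < 3 * n")
    case True
    define t where "t = (3 * n + 9) div 10"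
    have a: "10 * t \<le> 3 * n + 9" "3 * n \<le> 10 * t" unfolding t_def by presburger+
    then have b: "t1 \<le> t" "10 * t \<le> 4 * n" using True assms(1) by linarith+
    then show ?thesis using F_inc_chain[OF assms(1), of t1 t] a by blast
  next
    case False
    show ?thesis
    proof (cases "4 * n < 10 * t1")
      case True
      define t where "t = 4 * n div 10"
      have a: "10 * t \<le> 4 * n" "4 * n \<le> 10 * t + 9" unfolding t_def by presburger+
      then have "t \<le> t1" "3 * n \<le> 10 * t" "t1 \<le> n" using True t1(1) assms(1) by linarith+
      then show ?thesis using F_dec_chain[OF assms(1), of t t1] a unfolding t_def by blast
    next
      case False
      then show ?thesis using \<open>\<not> 10 * t1 < 3 * n\<close> by (intro exI[of _ t1]) auto
    qed
  qed
  then obtain t where t: "3 * n \<le> 10 * t" "10 * t \<le> 4 * n" "F n t1 \<le> F n t" by blast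
  have "t < n" using t(2) assms(1) by linarith
  then have "cM2 (join (complete_graph t) (complement (complete_graph (n - t)))) = F n t"
    by (rule cM2_join)
  then show ?thesis using t t1 by (intro exI[of _ t]) auto
qed

end
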